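(* For every integer $k\ge1$, the generating function $H_k(z)=\sum_{n\ge0}\mathbf{P}(\text{a random text of length } n \text{ has exactly } k \text{ clumps of } w)\,z^n$ satisfies $$H_k(z)=\frac{R(z)\,U(z)\,\big(M(z)-K(z)\big)^{k-1}}{(1-K(z))^{k}}=\frac{\pi_w z^{\ell}\,\big(z-1+(1-K(z))D(z)\big)^{k-1}}{(1-K(z))^{k}\,D(z)^{k+1}},$$ where $D(z)=\pi_w z^{\ell}+(1-z)C(z)$.
   Context: Let $\mathcal{A}$ be a finite alphabet with $|\mathcal{A}|\ge2$ and $w\in\mathcal{A}^*$ a fixed word of length $\ell=|w|\ge 2$. Bernoulli model: each letter $a$ has probability $p_a>0$, $\sum_a p_a=1$, $\mathbf{P}(a_1\cdots a_n)=\prod_i p_{a_i}$; for a language $L$, $L(z)=\sum_{x\in L}\mathbf{P}(x)z^{|x|}$; $\pi_w=\mathbf{P}(w)$. Occurrences of $w$ are position intervals where $w$ appears; two occurrences overlap if their intervals share a position; clumps are equivalence classes of occurrences under the transitive closure of overlapping. Autocorrelation set $\mathcal{C}=\{\epsilon\}\cup\{e\in\mathcal{A}^+: |e|<\ell,\ \exists e'\in\mathcal{A}^+,\ we=e'w\}$ with generating function $C(z)$, $\mathcal{C}_\circ=\mathcal{C}\setminus\{\epsilon\}$, $\mathcal{K}=\mathcal{C}_\circ\setminus\mathcal{C}_\circ\mathcal{A}^+$ with generating function $K(z)$. Languages: $\mathcal{R}=\{r\in\mathcal{A}^*w: \text{no } r=xwy,\ |y|>0\}$; $\mathcal{M}=\{m\in\mathcal{A}^+: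 wm\in\mathcal{A}^*w,\ \text{no } wm=xwy,\ |x|>0,|y|>0\}$; $\mathcal{U}=\{u\in\mathcal{A}^*: \text{no } wu=xwy,\ |x|>0\}$, with generating functions $R,M,U$; explicitly $R=\pi_w z^\ell/D$, $M=1+(z-1)/D$, $U=1/D$. *)

theory Defs
  imports "HOL-Computational_Algebra.Formal_Power_Series" "HOL-Library.Cardinality"
begin

definition wprob :: "('a \<Rightarrow> real) \<Rightarrow> 'a list \<Rightarrow> real" where
  "wprob p x = prod_list (map p x)"

definition lang_gf :: "('a \<Rightarrow> real) \<Rightarrow> 'a list set \<Rightarrow> real fps" where
  "lang_gf p L = Abs_fps (\<lambda>n. \<Sum>x\<in>{x\<in>L. length x = n}. wprob p x)"

text \<open>Occurrences of w in x, identified by their (0-based) starting position i;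
  the occurrence occupies positions i, ..., i + |w| - 1.\<close>

definition occs :: "'a list \<Rightarrow> 'a list \<Rightarrow> nat set" where
  "occs w x = {i. i + length w \<le> length x \<and> take (length w) (drop i x) = w}"

definition overlap_rel :: "'a list \<Rightarrow> 'a list \<Rightarrow> (nat \<times> nat) set" where
  "overlap_rel w x = {(i, j). i \<in> occs w x \<and> j \<in> occs w x \<and>
      {i..<i + length w} \<inter> {j..<j + length w} \<noteq> {}}"

definition clumps :: "'a list \<Rightarrow> 'a list \<Rightarrow> nat set set" where
  "clumps w x = occs w x // ((overlap_rel w x)\<^sup>*)"

definition num_clumps :: "'a list \<Rightarrow> 'a list \<Rightarrow> nat" where
  "num_clumps w x = card (clumps w x)"

definition H_gf :: "('a \<Rightarrow> real) \<Rightarrow> 'a list \<Rightarrow> nat \<Rightarrow> real fps" where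
  "H_gf p w k = lang_gf p {x. num_clumps w x = k}"

definition autocorr :: "'a list \<Rightarrow> 'a list set" where
  "autocorr w = {[]} \<union> {e. e \<noteq> [] \<and> length e < length w \<and> (\<exists>e'. e' \<noteq> [] \<and> w @ e = e' @ w)}"

definition autocorr0 :: "'a list \<Rightarrow> 'a list set" where
  "autocorr0 w = autocorr w - {[]}"

definition Kset :: "'a list \<Rightarrow> 'a list set" where
  "Kset w = autocorr0 w - {c @ v | c v. c \<in> autocorr0 w \<and> v \<noteq> []}"

definition Rset :: "'a list \<Rightarrow> 'a list set" where
  "Rset w = {r. (\<exists>u. r = u @ w) \<and> \<not> (\<exists>x y. r = x @ w @ y \<and> y \<noteq> [])}"

definition Mset :: "'a list \<Rightarrow> 'a list set" where
  "Mset w = {m. m \<noteq> [] \<and> (\<exists>u. w @ m = u @ w) \<and>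
              \<not> (\<exists>x y. w @ m = x @ w @ y \<and> x \<noteq> [] \<and> y \<noteq> [])}"

definition Uset :: "'a list \<Rightarrow> 'a list set" where
  "Uset w = {u. \<not> (\<exists>x y. w @ u = x @ w @ y \<and> x \<noteq> [])}"

definition D_gf :: "('a \<Rightarrow> real) \<Rightarrow> 'a list \<Rightarrow> real fps" where
  "D_gf p w = fps_const (wprob p w) * fps_X ^ length w + (1 - fps_X) * lang_gf p (autocorr w)"

end

theory Submission
  imports Defs
begin

definition conc :: "'a list set \<Rightarrow> 'a list set \<Rightarrow> 'a list set" where
  "conc A B = {x @ y | x y. x \<in> A \<and> y \<in> B}"

lemma lang_gf_nth: "fps_nth (lang_gf p L) n = (\<Sum>x\<in>{x\<in>L. length x = n}. wprob p x)"
  by (simp add: lang_gf_def)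

lemma wprob_append: "wprob p (x @ y) = wprob p x * wprob p y"
  by (simp add: wprob_def)

lemma fin_slice: "finite {x\<in>(L::('a::finite) list set). length x = n}"
  by (rule finite_subset[OF _ finite_list_length[of n]]) auto

lemma gf_union:
  fixes A B :: "('a::finite) list set"
  assumes "A \<inter> B = {}"
  shows "lang_gf p (A \<union> B) = lang_gf p A + lang_gf p B"
proof (rule fps_ext)
  fix n
  have e: "{x\<in>A \<union> B. length x = n} = {x\<in>A. length x = n} \<union> {x\<in>B. length x = n}" by auto
  show "fps_nth (lang_gf p (A \<union> B)) n = fps_nth (lang_gf p A + lang_gf p B) n"
    unfolding lang_gf_nth fps_add_nth e
    by (rule sum.union_disjoint) (use assms fin_slice in auto)
qed

lemma gf_diff:
  fixes A B :: "('a::finite) list set"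
  assumes "B \<subseteq> A"
  shows "lang_gf p (A - B) = lang_gf p A - lang_gf p B"
proof -
  have "lang_gf p A = lang_gf p ((A - B) \<union> B)" using assms by (simp add: Un_absorb2)
  also have "\<dots> = lang_gf p (A - B) + lang_gf p B" by (rule gf_union) auto
  finally show ?thesis by simp
qed

lemma gf_conc:
  fixes A B :: "('a::finite) list set"
  assumes inj: "inj_on (\<lambda>(x,y). x @ y) (A \<times> B)"
  shows "lang_gf p (conc A B) = lang_gf p A * lang_gf p B"
proof (rule fps_ext)
  fix n
  define F where "F = (\<lambda>i. {x\<in>A. length x = i} \<times> {y\<in>B. length y = n - i})"
  have "fps_nth (lang_gf p A * lang_gf p B) n =
     (\<Sum>i=0..n. \<Sum>q\<in>F i. wprob p (fst q) * wprob p (snd q))"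
    unfolding fps_mult_nth lang_gf_nth F_def
    by (simp add: sum_product sum.cartesian_product case_prod_beta)
  also have "\<dots> = (\<Sum>(i,q)\<in>Sigma {0..n} F. wprob p (fst q @ snd q))"
    by (subst sum.Sigma) (auto simp: F_def fin_slice wprob_append)
  also have "\<dots> = (\<Sum>x\<in>(\<lambda>(i,q). fst q @ snd q) ` Sigma {0..n} F. wprob p x)"
  proof -
    have ij: "inj_on (\<lambda>(i,q). fst q @ snd q) (Sigma {0..n} F)"
      using inj unfolding inj_on_def F_def by auto
    show ?thesis by (subst sum.reindex[OF ij]) (simp add: case_prod_beta comp_def)
  qed
  also have "(\<lambda>(i,q). fst q @ snd q) ` Sigma {0..n} F = {x\<in>conc A B. length x = n}"
  proof (rule set_eqI, rule iffI)
    fix x assume "x \<in> (\<lambda>(i,q). fst q @ snd q) ` Sigma {0..n} F"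
    then obtain i a b where "x = a @ b" "a \<in> A" "b \<in> B" "length a = i" "i \<le> n" "length b = n - i"
      by (auto simp: F_def)
    thus "x \<in> {x\<in>conc A B. length x = n}" unfolding conc_def by auto
  next
    fix x assume "x \<in> {x\<in>conc A B. length x = n}"
    then obtain a b where "x = a @ b" "a \<in> A" "b \<in> B" "length x = n" by (auto simp: conc_def)
    thus "x \<in> (\<lambda>(i,q). fst q @ snd q) ` Sigma {0..n} F"
      by (intro image_eqI[of _ _ "(length a, (a, b))"]) (auto simp: F_def)
  qed
  finally show "fps_nth (lang_gf p (conc A B)) n = fps_nth (lang_gf p A * lang_gf p B) n"
    by (simp add: lang_gf_nth)
qed

lemma sum_wprob_len:
  fixes p :: "'a::finite \<Rightarrow> real"
  shows "(\<Sum>x\<in>{x. length x = n}. wprob p x) = (\<Sum>a\<in>UNIV. p a) ^ n"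
proof (induction n)
  case 0
  then show ?case by (simp add: wprob_def)
next
  case (Suc n)
  have e: "{x::'a list. length x = Suc n} = (\<lambda>(a,xs). a # xs) ` (UNIV \<times> {x. length x = n})"
    by (auto simp: length_Suc_conv)
  have "(\<Sum>x\<in>{x::'a list. length x = Suc n}. wprob p x) =
        (\<Sum>q\<in>UNIV \<times> {x::'a list. length x = n}. wprob p (fst q # snd q))"
    unfolding e by (subst sum.reindex) (auto simp: inj_on_def case_prod_beta)
  also have "\<dots> = (\<Sum>a\<in>UNIV. p a) * (\<Sum>x\<in>{x::'a list. length x = n}. wprob p x)"
    by (simp add: sum.cartesian_product case_prod_beta sum_product wprob_def)
  finally show ?case using Suc by simp
qed

lemma gf_univ:
  fixes p :: "'a::finite \<Rightarrow> real"
  assumes "(\<Sum>a\<in>UNIV. p a) = 1"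
  shows "lang_gf p UNIV * (1 - fps_X) = 1"
proof -
  have "lang_gf p UNIV = Abs_fps (\<lambda>n. 1)"
    by (rule fps_ext) (simp add: lang_gf_nth sum_wprob_len assms)
  moreover have "Abs_fps (\<lambda>n. 1::real) * (1 - fps_X) = 1"
  proof (rule fps_ext)
    fix n show "fps_nth (Abs_fps (\<lambda>n. 1::real) * (1 - fps_X)) n = fps_nth (1::real fps) n"
      by (cases n) (simp_all add: algebra_simps fps_mult_nth_1 )
  qed
  ultimately show ?thesis by simp
qed

lemma gf_letters:
  fixes p :: "'a::finite \<Rightarrow> real"
  assumes "(\<Sum>a\<in>UNIV. p a) = 1"
  shows "lang_gf p {x. length x = 1} = fps_X"
proof (rule fps_ext)
  fix n
  show "fps_nth (lang_gf p {x. length x = 1}) n = fps_nth fps_X n"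
  proof (cases "n = 1")
    case True thus ?thesis by (simp add: lang_gf_nth sum_wprob_len assms fps_X_def)
  next
    case False
    hence "{x\<in>{x::'a list. length x = 1}. length x = n} = {}" by auto
    thus ?thesis using False by (simp only: lang_gf_nth) (simp add: fps_X_def)
  qed
qed

lemma gf_single:
  fixes p :: "'a::finite \<Rightarrow> real"
  shows "lang_gf p {w} = fps_const (wprob p w) * fps_X ^ length w"
proof (rule fps_ext)
  fix n
  show "fps_nth (lang_gf p {w}) n = fps_nth (fps_const (wprob p w) * fps_X ^ length w) n"
  proof -
    have "{x\<in>{w}. length x = n} = (if n = length w then {w} else {})" by auto
    thus ?thesis by (simp add: lang_gf_nth fps_X_power_nth)
  qed
qed

lemma fps_div_eq:
  fixes f g h :: "real fps"
  assumes "fps_nth g 0 \<noteq> 0"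
  shows "f / g = h \<longleftrightarrow> f = h * g"
proof
  assume "f / g = h"
  hence "f * inverse g = h" using fps_divide_unit[OF assms] by simp
  hence "f * inverse g * g = h * g" by simp
  thus "f = h * g" using inverse_mult_eq_1[OF assms] by (simp add: mult.assoc)
next
  assume "f = h * g"
  thus "f / g = h" using fps_divide_unit[OF assms] inverse_mult_eq_1'[OF assms]
    by (simp add: mult.assoc)
qed

definition ovl :: "nat \<Rightarrow> nat set \<Rightarrow> (nat \<times> nat) set" where
  "ovl L A = {(i,j). i \<in> A \<and> j \<in> A \<and> {i..<i+L} \<inter> {j..<j+L} \<noteq> {}}"

lemma ivl_int: "{i..<i+L} \<inter> {j..<j+(L::nat)} \<noteq> {} \<longleftrightarrow> i < j + L \<and> j < i + L"
proof
  assume "{i..<i+L} \<inter> {j..<j+L} \<noteq> {}"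
  thus "i < j + L \<and> j < i + L" by auto
next
  assume h: "i < j + L \<and> j < i + L"
  have "max i j \<in> {i..<i+L} \<inter> {j..<j+L}" using h by (auto simp: max_def)
  thus "{i..<i+L} \<inter> {j..<j+L} \<noteq> {}" by blast
qed

lemma ovl_iff: "(i,j) \<in> ovl L A \<longleftrightarrow> i \<in> A \<and> j \<in> A \<and> i < j + L \<and> j < i + L"
  by (auto simp add: ovl_def ivl_int)

lemma sym_ovl: "sym (ovl L A)"
  by (auto simp: sym_def ovl_iff)

lemma ovl_mono: "A \<subseteq> A' \<Longrightarrow> ovl L A \<subseteq> ovl L A'"
  by (auto simp: ovl_iff)

lemma rt_closed:
  assumes "(a,c) \<in> (ovl L A)\<^sup>*" "a \<in> A" shows "c \<in> A"
  using assms by (induction rule: rtrancl_induct) (auto simp: ovl_iff)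

lemma rt_sym:
  assumes "(a,c) \<in> (ovl L A)\<^sup>*" shows "(c,a) \<in> (ovl L A)\<^sup>*"
  using sym_rtrancl[OF sym_ovl[of L A]] assms by (auto simp: sym_def)

lemma crux:
  fixes A :: "nat set"
  assumes nA: "n \<notin> A"
    and B_def: "B = {a\<in>A. (a,n) \<in> ovl L (insert n A)}"
    and cl: "\<And>b1 b2. b1 \<in> B \<Longrightarrow> b2 \<in> B \<Longrightarrow> (b1,b2) \<in> (ovl L A)\<^sup>*"
    and path: "(a,c) \<in> (ovl L (insert n A))\<^sup>*" and aA: "a \<in> A"
  shows "(c \<in> A \<and> (a,c) \<in> (ovl L A)\<^sup>*) \<or> (c = n \<and> (\<exists>b\<in>B. (a,b) \<in> (ovl L A)\<^sup>*))"
  using path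
proof (induction rule: rtrancl_induct)
  case base
  then show ?case using aA by auto
next
  case (step y z)
  from step.hyps(2) have yz: "y \<in> insert n A" "z \<in> insert n A" "y < z + L" "z < y + L"
    by (auto simp: ovl_iff)
  from step.IH show ?case
  proof
    assume h: "y \<in> A \<and> (a, y) \<in> (ovl L A)\<^sup>*"
    show ?case
    proof (cases "z = n")
      case True
      hence "y \<in> B" using h step.hyps(2) B_def by auto
      thus ?thesis using h True by auto
    next
      case False
      hence "(y,z) \<in> ovl L A" using yz h by (auto simp: ovl_iff)
      thus ?thesis using h False yz by (auto intro: rtrancl_into_rtrancl)
    qed
  next
    assume h: "y = n \<and> (\<exists>b\<in>B. (a, b) \<in> (ovl L A)\<^sup>*)"
    then obtain b where b: "b \<in> B" "(a,b) \<in> (ovl L A)\<^sup>*" by auto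
    show ?case
    proof (cases "z = n")
      case True thus ?thesis using b by auto
    next
      case False
      hence zA: "z \<in> A" using yz by auto
      have "(z, n) \<in> ovl L (insert n A)" using step.hyps(2) h sym_ovl unfolding sym_def by blast
      hence "z \<in> B" using B_def zA by auto
      hence "(b,z) \<in> (ovl L A)\<^sup>*" using cl b by auto
      thus ?thesis using b zA by (auto intro: rtrancl_trans)
    qed
  qed
qed

lemma quot_img: "A // r = (\<lambda>x. r``{x}) ` A"
  by (auto simp: quotient_def)

lemma clump_new:
  fixes A :: "nat set"
  assumes fin: "finite A" and L: "L > 0" and far: "\<And>a. a \<in> A \<Longrightarrow> a + L \<le> n"
  shows "card (insert n A // (ovl L (insert n A))\<^sup>*) = Suc (card (A // (ovl L A)\<^sup>*))"
proof -
  define r where "r = (ovl L A)\<^sup>*"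
  define r' where "r' = (ovl L (insert n A))\<^sup>*"
  have nA: "n \<notin> A" using far L by force
  define B where "B = {a\<in>A. (a,n) \<in> ovl L (insert n A)}"
  have Be: "B = {}" by (auto simp: B_def ovl_iff dest: far)
  have cr: "\<And>a c. (a,c) \<in> r' \<Longrightarrow> a \<in> A \<Longrightarrow> c \<in> A \<and> (a,c) \<in> r"
    using crux[OF nA B_def] Be unfolding r_def r'_def by blast
  have rr': "r \<subseteq> r'" unfolding r_def r'_def by (intro rtrancl_mono ovl_mono) auto
  have e1: "r'``{a} = r``{a}" if "a \<in> A" for a using cr that rr' by auto
  have e2: "r'``{n} = {n}"
  proof -
    have "c = n" if "(n,c) \<in> r'" for c
    proof -
      have c1: "c \<in> insert n A" using rt_closed that unfolding r'_def by blast
      have "(c,n) \<in> r'" using rt_sym that unfolding r'_def by blast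
      thus "c = n" using cr nA c1 by blast
    qed
    thus ?thesis unfolding r'_def by auto
  qed
  have "insert n A // r' = insert {n} (A // r)"
    unfolding quot_img using e1 e2 by (auto simp: image_iff)
  moreover have "{n} \<notin> A // r"
  proof
    assume "{n} \<in> A // r"
    then obtain a where "a \<in> A" "{n} = r``{a}" by (auto simp: quot_img)
    hence "(a,n) \<in> r" by auto
    thus False using rt_closed \<open>a \<in> A\<close> nA unfolding r_def by blast
  qed
  moreover have "finite (A // r)" using fin by (simp add: quot_img)
  ultimately show ?thesis unfolding r_def r'_def by simp
qed

lemma clump_join:
  fixes A :: "nat set"
  assumes fin: "finite A" and iA: "i \<in> A" and near: "n < i + L" and below: "\<And>a. a \<in> A \<Longrightarrow> a < n"
  shows "card (insert n A // (ovl L (insert n A))\<^sup>*) = card (A // (ovl L A)\<^sup>*)"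
proof -
  define r where "r = (ovl L A)\<^sup>*"
  define r' where "r' = (ovl L (insert n A))\<^sup>*"
  have nA: "n \<notin> A" using below by blast
  define B where "B = {a\<in>A. (a,n) \<in> ovl L (insert n A)}"
  have Bd: "b \<in> A \<and> n < b + L" if "b \<in> B" for b using that below by (auto simp: B_def ovl_iff)
  have cl: "(b1,b2) \<in> r" if "b1 \<in> B" "b2 \<in> B" for b1 b2
  proof -
    have "(b1,b2) \<in> ovl L A" using Bd[OF that(1)] Bd[OF that(2)] below[of b1] below[of b2]
      by (auto simp: ovl_iff)
    thus ?thesis unfolding r_def by blast
  qed
  have iB: "i \<in> B" using iA near below[OF iA] by (auto simp: B_def ovl_iff)
  have cr: "\<And>a c. (a,c) \<in> r' \<Longrightarrow> a \<in> A \<Longrightarrow> (c \<in> A \<and> (a,c) \<in> r) \<or> (c = n \<and> (a,i) \<in> r)"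
  proof -
    fix a c assume "(a,c) \<in> r'" "a \<in> A"
    hence "(c \<in> A \<and> (a,c) \<in> r) \<or> (c = n \<and> (\<exists>b\<in>B. (a,b) \<in> r))"
      using crux[OF nA B_def, of a c] cl unfolding r_def r'_def by blast
    thus "(c \<in> A \<and> (a,c) \<in> r) \<or> (c = n \<and> (a,i) \<in> r)"
    proof
      assume "c = n \<and> (\<exists>b\<in>B. (a,b) \<in> r)"
      then obtain b where "c = n" "b \<in> B" "(a,b) \<in> r" by auto
      moreover have "(b,i) \<in> r" using cl[OF \<open>b \<in> B\<close> iB] .
      ultimately have "(a,i) \<in> r" unfolding r_def by (rule_tac rtrancl_trans) 
      thus ?thesis using \<open>c = n\<close> by simp
    qed simp
  qed
  have rr': "r \<subseteq> r'" unfolding r_def r'_def by (intro rtrancl_mono ovl_mono) auto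
  have inr': "(i,n) \<in> r'" "(n,i) \<in> r'" using iA near below[OF iA] unfolding r'_def
    by (auto simp: ovl_iff)
  have tr': "trans r'" unfolding r'_def by (rule trans_rtrancl)
  define g where "g = (\<lambda>X. if i \<in> X then insert n X else X)"
  have e1: "r'``{a} = g (r``{a})" if aA: "a \<in> A" for a
  proof (rule set_eqI, rule iffI)
    fix c assume "c \<in> r'``{a}"
    thus "c \<in> g (r``{a})" using cr[of a c] aA by (auto simp: g_def)
  next
    fix c assume "c \<in> g (r``{a})"
    thus "c \<in> r'``{a}" using rr' inr' by (auto simp: g_def split: if_splits intro: transD[OF tr'])
  qed
  have e2: "r'``{n} = g (r``{i})"
  proof (rule set_eqI, rule iffI)
    fix c assume h: "c \<in> r'``{n}"
    show "c \<in> g (r``{i})"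
    proof (cases "c = n")
      case True thus ?thesis by (auto simp: g_def r_def)
    next
      case False
      have "c \<in> insert n A" using h rt_closed unfolding r'_def by blast
      hence cA: "c \<in> A" using False by auto
      have "(c,n) \<in> r'" using h rt_sym unfolding r'_def by blast
      hence "(c,i) \<in> r" using cr[OF _ cA] nA by blast
      hence "(i,c) \<in> r" using rt_sym unfolding r_def by blast
      thus ?thesis by (auto simp: g_def r_def)
    qed
  next
    fix c assume "c \<in> g (r``{i})"
    hence "c = n \<or> (i,c) \<in> r" by (auto simp: g_def r_def split: if_splits)
    thus "c \<in> r'``{n}" using rr' inr' by (auto intro: transD[OF tr'])
  qed
  have q: "insert n A // r' = g ` (A // r)"
    unfolding quot_img image_image using e1 e2 iA by (auto simp: image_iff)
  have sub: "X \<subseteq> A" if "X \<in> A // r" for X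
    using that rt_closed unfolding quot_img r_def by blast
  have "inj_on g (A // r)"
  proof (rule inj_onI)
    fix X Y assume X: "X \<in> A // r" and Y: "Y \<in> A // r" and e: "g X = g Y"
    have "X = g X - {n}" using sub[OF X] nA by (auto simp: g_def)
    also have "\<dots> = Y" using e sub[OF Y] nA by (auto simp: g_def)
    finally show "X = Y" .
  qed
  thus ?thesis unfolding r_def r'_def[symmetric] using q by (simp add: card_image r_def)
qed

lemma occs_le: "i \<in> occs w x \<Longrightarrow> i + length w \<le> length x"
  by (simp add: occs_def)

lemma occ_decomp: "z = x @ w @ y \<longleftrightarrow>
   length x \<in> occs w z \<and> x = take (length x) z \<and> y = drop (length x + length w) z"
proof
  assume "z = x @ w @ y" thus "length x \<in> occs w z \<and> x = take (length x) z \<and> y = drop (length x + length w) z"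
    by (simp add: occs_def)
next
  assume h: "length x \<in> occs w z \<and> x = take (length x) z \<and> y = drop (length x + length w) z"
  hence "take (length w) (drop (length x) z) = w" by (simp add: occs_def)
  hence "z = take (length x) z @ w @ drop (length w) (drop (length x) z)"
    by (metis append_take_drop_id)
  thus "z = x @ w @ y" using h by (simp add: add.commute)
qed

lemma ex_split_occ: "(\<exists>x y. z = x @ w @ y \<and> P x y) \<longleftrightarrow>
   (\<exists>j\<in>occs w z. P (take j z) (drop (j + length w) z))"
proof
  assume "\<exists>x y. z = x @ w @ y \<and> P x y"
  then obtain x y where "z = x @ w @ y" "P x y" by blast
  thus "\<exists>j\<in>occs w z. P (take j z) (drop (j + length w) z)"
    using occ_decomp[of z x w y] by metis
next
  assume "\<exists>j\<in>occs w z. P (take j z) (drop (j + length w) z)"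
  then obtain j where j: "j \<in> occs w z" "P (take j z) (drop (j + length w) z)" by blast
  have lj: "length (take j z) = j" using occs_le[OF j(1)] by simp
  have "z = take j z @ w @ drop (j + length w) z"
    using occ_decomp[of z "take j z" w "drop (j + length w) z"] j(1) lj by simp
  thus "\<exists>x y. z = x @ w @ y \<and> P x y" using j(2) by blast
qed

lemma ends_w_iff: "(\<exists>u. z = u @ w) \<longleftrightarrow> length w \<le> length z \<and> length z - length w \<in> occs w z"
proof -
  have "(\<exists>u. z = u @ w) \<longleftrightarrow> (\<exists>x y. z = x @ w @ y \<and> y = [])" by auto
  also have "\<dots> \<longleftrightarrow> (\<exists>j\<in>occs w z. drop (j + length w) z = [])" by (rule ex_split_occ)
  also have "\<dots> \<longleftrightarrow> length w \<le> length z \<and> length z - length w \<in> occs w z"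
  proof
    assume "\<exists>j\<in>occs w z. drop (j + length w) z = []"
    then obtain j where j: "j \<in> occs w z" "drop (j + length w) z = []" by blast
    hence "j + length w = length z" using occs_le[OF j(1)] by simp
    hence "length z - length w = j" by simp
    thus "length w \<le> length z \<and> length z - length w \<in> occs w z" using j occs_le[OF j(1)] by auto
  next
    assume h: "length w \<le> length z \<and> length z - length w \<in> occs w z"
    thus "\<exists>j\<in>occs w z. drop (j + length w) z = []" by (intro bexI[of _ "length z - length w"]) auto
  qed
  finally show ?thesis .
qed

lemma occs_app_left: "i \<in> occs w v \<Longrightarrow> i \<in> occs w (v @ m)"
  by (auto simp: occs_def)

lemma occs_app_shift: "i \<in> occs w m \<Longrightarrow> length v + i \<in> occs w (v @ m)"
  by (auto simp: occs_def)

lemma occs_app_inv_right: "i \<in> occs w (v @ m) \<Longrightarrow> length v \<le> i \<Longrightarrow> i - length v \<in> occs w m"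
  by (auto simp: occs_def)

lemma occs_app_inv_left: "i \<in> occs w (v @ m) \<Longrightarrow> i + length w \<le> length v \<Longrightarrow> i \<in> occs w v"
  by (auto simp: occs_def)

lemma occs_finite: "finite (occs w x)"
  by (rule finite_subset[of _ "{..length x}"]) (auto simp: occs_def)

lemma take_nil_iff: "j \<le> length z \<Longrightarrow> take j z = [] \<longleftrightarrow> j = 0"
  by auto

lemma R_char: "r \<in> Rset w \<longleftrightarrow> (\<exists>u. r = u @ w) \<and> (\<forall>j\<in>occs w r. j + length w = length r)"
proof -
  have "(\<exists>x y. r = x @ w @ y \<and> y \<noteq> []) \<longleftrightarrow> (\<exists>j\<in>occs w r. drop (j + length w) r \<noteq> [])"
    by (rule ex_split_occ)
  also have "\<dots> \<longleftrightarrow> (\<exists>j\<in>occs w r. j + length w \<noteq> length r)"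
    using occs_le[of _ w r] by (metis drop_eq_Nil le_antisym)
  finally show ?thesis unfolding Rset_def by auto
qed

lemma M_char: "m \<in> Mset w \<longleftrightarrow> m \<noteq> [] \<and> (\<exists>u. w @ m = u @ w) \<and>
   (\<forall>j\<in>occs w (w @ m). j = 0 \<or> j + length w = length (w @ m))"
proof -
  have "(\<exists>x y. w @ m = x @ w @ y \<and> x \<noteq> [] \<and> y \<noteq> []) \<longleftrightarrow>
     (\<exists>j\<in>occs w (w @ m). take j (w @ m) \<noteq> [] \<and> drop (j + length w) (w @ m) \<noteq> [])"
    by (rule ex_split_occ)
  also have "\<dots> \<longleftrightarrow> (\<exists>j\<in>occs w (w @ m). j \<noteq> 0 \<and> j + length w \<noteq> length (w @ m))"
  proof -
    have "take j (w @ m) \<noteq> [] \<and> drop (j + length w) (w @ m) \<noteq> [] \<longleftrightarrow>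
          j \<noteq> 0 \<and> j + length w \<noteq> length (w @ m)" if "j \<in> occs w (w @ m)" for j
      using occs_le[OF that] by (metis drop_eq_Nil le_antisym le_add1 take_nil_iff order_trans)
    thus ?thesis by blast
  qed
  finally show ?thesis unfolding Mset_def by auto
qed

lemma U_char: "x \<in> Uset w \<longleftrightarrow> (\<forall>j\<in>occs w (w @ x). j = 0)"
proof -
  have "(\<exists>a y. w @ x = a @ w @ y \<and> a \<noteq> []) \<longleftrightarrow>
     (\<exists>j\<in>occs w (w @ x). take j (w @ x) \<noteq> [])"
    by (rule ex_split_occ)
  also have "\<dots> \<longleftrightarrow> (\<exists>j\<in>occs w (w @ x). j \<noteq> 0)"
  proof -
    have "take j (w @ x) \<noteq> [] \<longleftrightarrow> j \<noteq> 0" if "j \<in> occs w (w @ x)" for j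
      using occs_le[OF that] by (metis le_add1 take_nil_iff order_trans)
    thus ?thesis by blast
  qed
  finally show ?thesis unfolding Uset_def by auto
qed

lemma end_occ: "length u \<in> occs w (u @ w)"
  by (simp add: occs_def)

lemma occs_M:
  assumes L: "0 < length w" and v: "v = u @ w" and m: "m \<in> Mset w"
  shows "occs w (v @ m) = insert (length v + length m - length w) (occs w v)"
proof (rule set_eqI, rule iffI)
  fix i assume i: "i \<in> occs w (v @ m)"
  show "i \<in> insert (length v + length m - length w) (occs w v)"
  proof (cases "i + length w \<le> length v")
    case True thus ?thesis using occs_app_inv_left[OF i] by auto
  next
    case False
    hence iu: "length u < i" using v by simp
    have "i - length u \<in> occs w (w @ m)"
      using occs_app_inv_right[of i w u "w @ m"] i iu v by simp
    hence "i - length u = 0 \<or> i - length u + length w = length (w @ m)" using m M_char by blast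
    thus ?thesis using iu v by auto
  qed
next
  fix i assume i: "i \<in> insert (length v + length m - length w) (occs w v)"
  obtain u' where u': "w @ m = u' @ w" using m M_char by blast
  have "length m = length u'" using arg_cong[OF u', of length] by simp
  moreover have "length (u @ u') \<in> occs w ((u @ u') @ w)" by (rule end_occ)
  ultimately have "length v + length m - length w \<in> occs w (v @ m)" using v u' by simp
  thus "i \<in> occs w (v @ m)" using i occs_app_left by auto
qed

lemma occs_U:
  assumes L: "0 < length w" and v: "v = u @ w" and x: "x \<in> Uset w"
  shows "occs w (v @ x) = occs w v"
proof (rule set_eqI, rule iffI)
  fix i assume i: "i \<in> occs w (v @ x)"
  show "i \<in> occs w v"
  proof (cases "i + length w \<le> length v")
    case True thus ?thesis using occs_app_inv_left[OF i] by auto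
  next
    case False
    hence iu: "length u < i" using v by simp
    have "i - length u \<in> occs w (w @ x)"
      using occs_app_inv_right[of i w u "w @ x"] i iu v by simp
    hence "i - length u = 0" using x U_char by blast
    thus ?thesis using iu by auto
  qed
qed (rule occs_app_left)

lemma overlap_ovl: "overlap_rel w x = ovl (length w) (occs w x)"
  by (simp add: overlap_rel_def ovl_def)

lemma num_clumps_ovl: "num_clumps w x = card (occs w x // (ovl (length w) (occs w x))\<^sup>*)"
  by (simp add: num_clumps_def clumps_def overlap_ovl)

lemma clumps_M:
  assumes L: "0 < length w" and v: "v = u @ w" and m: "m \<in> Mset w"
  shows "num_clumps w (v @ m) = num_clumps w v + (if length m < length w then 0 else 1)"
proof -
  have mne: "m \<noteq> []" using m M_char by blast
  have oc: "occs w (v @ m) = insert (length v + length m - length w) (occs w v)"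
    by (rule occs_M[OF L v m])
  have le: "a + length w \<le> length v" if "a \<in> occs w v" for a using occs_le[OF that] .
  show ?thesis
  proof (cases "length m < length w")
    case True
    have "card (insert (length v + length m - length w) (occs w v) //
            (ovl (length w) (insert (length v + length m - length w) (occs w v)))\<^sup>*) =
          card (occs w v // (ovl (length w) (occs w v))\<^sup>*)"
    proof (rule clump_join[OF occs_finite, of "length u"])
      show "length u \<in> occs w v" using v end_occ by simp
      show "length v + length m - length w < length u + length w" using v True by simp
      show "a < length v + length m - length w" if "a \<in> occs w v" for a
        using le[OF that] v mne by (cases m) auto
    qed
    thus ?thesis using True by (simp add: num_clumps_ovl oc)
  next
    case False
    have "card (insert (length v + length m - length w) (occs w v) //
            (ovl (length w) (insert (length v + length m - length w) (occs w v)))\<^sup>*) =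
          Suc (card (occs w v // (ovl (length w) (occs w v))\<^sup>*))"
    proof (rule clump_new[OF occs_finite L])
      show "a + length w \<le> length v + length m - length w" if "a \<in> occs w v" for a
        using le[OF that] False by simp
    qed
    thus ?thesis using False by (simp add: num_clumps_ovl oc)
  qed
qed

lemma clumps_U:
  assumes L: "0 < length w" and v: "v = u @ w" and x: "x \<in> Uset w"
  shows "num_clumps w (v @ x) = num_clumps w v"
  by (simp add: num_clumps_ovl occs_U[OF L v x])

lemma num_clumps_0: "num_clumps w x = 0 \<longleftrightarrow> occs w x = {}"
proof -
  have fin: "finite (occs w x // (ovl (length w) (occs w x))\<^sup>*)"
    by (simp add: quot_img occs_finite)
  show ?thesis unfolding num_clumps_ovl using fin by (auto simp: quot_img)
qed

definition AW :: "'a list \<Rightarrow> 'a list set" where "AW w = {v. \<exists>u. v = u @ w}"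
definition Pset :: "'a list \<Rightarrow> nat \<Rightarrow> 'a list set" where
  "Pset w k = {v \<in> AW w. num_clumps w v = k}"
definition Nset :: "'a list \<Rightarrow> 'a list set" where "Nset w = {x. occs w x = {}}"

lemma shift_occ:
  assumes v1: "v1 = u1 @ w" and v2: "v2 = u2 @ w" and e: "v1 @ y1 = v2 @ y2"
    and lt: "length v1 < length v2"
  shows "\<exists>t. t \<noteq> [] \<and> y1 = t @ y2 \<and> length t \<in> occs w (w @ y1)"
proof -
  obtain t where t: "(v1 = v2 @ t \<and> t @ y1 = y2) \<or> (v1 @ t = v2 \<and> y1 = t @ y2)"
    using e by (auto simp: append_eq_append_conv2)
  hence t2: "v1 @ t = v2" "y1 = t @ y2" using lt by auto
  hence tne: "t \<noteq> []" using lt by auto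
  have "length u2 \<in> occs w (v2 @ y2)" using v2 end_occ occs_app_left by metis
  hence "length u2 \<in> occs w (u1 @ (w @ y1))" using e v1 by simp
  moreover have "length u1 \<le> length u2" using lt v1 v2 by simp
  ultimately have "length u2 - length u1 \<in> occs w (w @ y1)"
    using occs_app_inv_right by blast
  moreover have "length u2 - length u1 = length t"
    using arg_cong[OF t2(1), of length] v1 v2 by simp
  ultimately show ?thesis using tne t2 by auto
qed

lemma inj_AW:
  assumes S: "\<And>y1 y2 t. y1 \<in> S \<Longrightarrow> y2 \<in> S \<Longrightarrow> t \<noteq> [] \<Longrightarrow> y1 = t @ y2 \<Longrightarrow>
                length t \<in> occs w (w @ y1) \<Longrightarrow> False"
  shows "inj_on (\<lambda>(x,y). x @ y) (AW w \<times> S)"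
proof (rule inj_onI, clarsimp simp: AW_def)
  fix u1 y1 u2 y2
  assume y: "y1 \<in> S" "y2 \<in> S" and e: "u1 @ w @ y1 = u2 @ w @ y2"
  have "\<not> length (u1 @ w) < length (u2 @ w)"
    using shift_occ[of "u1 @ w" u1 w "u2 @ w" u2 y1 y2] e S y by auto
  moreover have "\<not> length (u2 @ w) < length (u1 @ w)"
    using shift_occ[of "u2 @ w" u2 w "u1 @ w" u1 y2 y1] e S y by auto
  ultimately have "length u1 = length u2" by simp
  thus "u1 = u2 \<and> y1 = y2" using e by auto
qed

lemma inj_AW_U: "inj_on (\<lambda>(x,y). x @ y) (AW w \<times> Uset w)"
  by (rule inj_AW) (auto simp: U_char)

lemma inj_AW_M: "inj_on (\<lambda>(x,y). x @ y) (AW w \<times> Mset w)"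
proof (rule inj_AW)
  fix y1 y2 t assume h: "y1 \<in> Mset w" "y2 \<in> Mset w" "t \<noteq> []" "y1 = t @ y2"
    "length t \<in> occs w (w @ y1)"
  hence "length t = 0 \<or> length t + length w = length (w @ y1)" using M_char by blast
  moreover have "y2 \<noteq> []" using h(2) M_char by blast
  ultimately show False using h by auto
qed

lemma inj_on_subset2: "inj_on f (A \<times> B) \<Longrightarrow> A' \<subseteq> A \<Longrightarrow> B' \<subseteq> B \<Longrightarrow> inj_on f (A' \<times> B')"
  by (rule inj_on_subset) auto

lemma AW_append_M: "v \<in> AW w \<Longrightarrow> m \<in> Mset w \<Longrightarrow> v @ m \<in> AW w"
proof -
  assume "v \<in> AW w" "m \<in> Mset w"
  then obtain u u' where "v = u @ w" "w @ m = u' @ w" using M_char[of m w] by (auto simp: AW_def)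
  thus ?thesis unfolding AW_def by (intro CollectI exI[of _ "u @ u'"]) simp
qed

lemma Max_occ_split:
  assumes L: "0 < length w" and k: "num_clumps w x = k" "1 \<le> k"
  shows "x \<in> conc (Pset w k) (Uset w)"
proof -
  have ne: "occs w x \<noteq> {}" using k num_clumps_0[of w x] by auto
  define i where "i = Max (occs w x)"
  have i: "i \<in> occs w x" using Max_in[OF occs_finite ne] unfolding i_def .
  have imax: "j \<le> i" if "j \<in> occs w x" for j using Max_ge[OF occs_finite that] unfolding i_def .
  have x: "x = take i x @ w @ drop (i + length w) x"
    using occ_decomp[of x "take i x" w "drop (i + length w) x"] i occs_le[OF i] by simp
  define y where "y = drop (i + length w) x"
  have yU: "y \<in> Uset w"
    unfolding U_char
  proof
    fix j assume "j \<in> occs w (w @ y)"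
    hence "length (take i x) + j \<in> occs w (take i x @ (w @ y))" by (rule occs_app_shift)
    moreover have "length (take i x) = i" using occs_le[OF i] by simp
    moreover have "take i x @ (w @ y) = x" using x[symmetric] unfolding y_def by simp
    ultimately have "i + j \<in> occs w x" by simp
    thus "j = 0" using imax by fastforce
  qed
  have xe: "(take i x @ w) @ y = x" using x[symmetric] unfolding y_def by simp
  have v: "take i x @ w \<in> AW w" by (auto simp: AW_def)
  have "num_clumps w ((take i x @ w) @ y) = num_clumps w (take i x @ w)"
    by (rule clumps_U[OF L refl yU])
  hence "num_clumps w (take i x @ w) = k" using k unfolding xe by simp
  hence "take i x @ w \<in> Pset w k" using v by (simp add: Pset_def)
  hence "\<exists>a b. x = a @ b \<and> a \<in> Pset w k \<and> b \<in> Uset w" using yU xe by metis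
  thus ?thesis unfolding conc_def by simp
qed

lemma S1:
  assumes L: "0 < length w" and k: "1 \<le> k"
  shows "{x. num_clumps w x = k} = conc (Pset w k) (Uset w)"
proof
  show "{x. num_clumps w x = k} \<subseteq> conc (Pset w k) (Uset w)" using Max_occ_split[OF L _ k] by blast
  show "conc (Pset w k) (Uset w) \<subseteq> {x. num_clumps w x = k}"
  proof
    fix x assume "x \<in> conc (Pset w k) (Uset w)"
    then obtain v y where "x = v @ y" "v \<in> Pset w k" "y \<in> Uset w" unfolding conc_def by blast
    then obtain u where "v = u @ w" "num_clumps w v = k" by (auto simp: Pset_def AW_def)
    thus "x \<in> {x. num_clumps w x = k}" using clumps_U[OF L \<open>v = u @ w\<close> \<open>y \<in> Uset w\<close>] \<open>x = v @ y\<close> by simp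
  qed
qed

lemma concI: "a \<in> A \<Longrightarrow> b \<in> B \<Longrightarrow> x = a @ b \<Longrightarrow> x \<in> conc A B"
  unfolding conc_def by blast

lemma concE: "x \<in> conc A B \<Longrightarrow> (\<And>a b. a \<in> A \<Longrightarrow> b \<in> B \<Longrightarrow> x = a @ b \<Longrightarrow> P) \<Longrightarrow> P"
  unfolding conc_def by blast

lemma occ_split: assumes "j \<in> occs w z" shows "z = take j z @ w @ drop (j + length w) z"
proof -
  have t: "take (length w) (drop j z) = w" using assms by (simp add: occs_def)
  have "drop j z = take (length w) (drop j z) @ drop (length w) (drop j z)" by (rule append_take_drop_id[symmetric])
  also have "\<dots> = w @ drop (j + length w) z" using t by (simp add: add.commute)
  finally have "drop j z = w @ drop (j + length w) z" .
  thus ?thesis by (metis append_take_drop_id)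
qed

lemma K_char: "Kset w = {m \<in> Mset w. length m < length w}"
proof (rule set_eqI, rule iffI)
  fix m assume mK: "m \<in> Kset w"
  hence "m \<in> autocorr0 w" unfolding Kset_def by blast
  hence m0: "m \<noteq> []" "length m < length w" and e': "\<exists>e'. e' \<noteq> [] \<and> w @ m = e' @ w"
    unfolding autocorr0_def autocorr_def by blast+
  have nodec: "\<not> (\<exists>c v. m = c @ v \<and> c \<in> autocorr0 w \<and> v \<noteq> [])"
    using mK unfolding Kset_def by blast
  have "\<forall>j\<in>occs w (w @ m). j = 0 \<or> j + length w = length (w @ m)"
  proof
    fix j assume j: "j \<in> occs w (w @ m)"
    show "j = 0 \<or> j + length w = length (w @ m)"
    proof (rule ccontr)
      assume "\<not> (j = 0 \<or> j + length w = length (w @ m))"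
      hence j0: "j \<noteq> 0" "j < length m" using occs_le[OF j] by auto
      define T where "T = take j (w @ m)"
      define D where "D = drop (j + length w) (w @ m)"
      have dec: "w @ m = T @ w @ D" unfolding T_def D_def by (rule occ_split[OF j])
      have lT: "length T = j" unfolding T_def using occs_le[OF j] by simp
      have "w @ take j m = take (length w + j) (w @ m)" by simp
      also have "\<dots> = take (length (T @ w)) ((T @ w) @ D)" using dec lT by (simp add: add.commute)
      also have "\<dots> = T @ w" by simp
      finally have wc: "w @ take j m = take j (w @ m) @ w" unfolding T_def .
      have tj: "take j m \<noteq> []" "length (take j m) < length w" "take j (w @ m) \<noteq> []"
        using j0 m0 by auto
      have "take j m \<in> autocorr0 w"
        unfolding autocorr0_def autocorr_def using tj wc by blast
      moreover have "m = take j m @ drop j m" by simp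
      moreover have "drop j m \<noteq> []" using j0 by simp
      ultimately show False using nodec by blast
    qed
  qed
  moreover have "\<exists>u. w @ m = u @ w" using e' by blast
  ultimately show "m \<in> {m \<in> Mset w. length m < length w}" using m0 M_char by blast
next
  fix m assume "m \<in> {m \<in> Mset w. length m < length w}"
  hence mM: "m \<in> Mset w" and ml: "length m < length w" by auto
  obtain u where u: "w @ m = u @ w" using mM M_char by blast
  have m0: "m \<noteq> []" using mM M_char by blast
  have lu: "length u = length m" using arg_cong[OF u, of length] by simp
  have "u \<noteq> []" using m0 lu by auto
  hence "m \<in> autocorr0 w" using m0 ml u unfolding autocorr0_def autocorr_def by blast
  moreover have "m \<notin> {c @ v |c v. c \<in> autocorr0 w \<and> v \<noteq> []}"
  proof
    assume "m \<in> {c @ v |c v. c \<in> autocorr0 w \<and> v \<noteq> []}"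
    then obtain c v where cv: "m = c @ v" "c \<in> autocorr0 w" "v \<noteq> []" by blast
    have "c \<noteq> [] \<and> (\<exists>c'. c' \<noteq> [] \<and> w @ c = c' @ w)"
      using cv(2) unfolding autocorr0_def autocorr_def by blast
    then obtain c' where c': "c' \<noteq> []" "w @ c = c' @ w" "c \<noteq> []" by blast
    have "w @ m = (w @ c) @ v" using cv by simp
    hence "w @ m = c' @ w @ v" using c'(2) by simp
    hence "length c' \<in> occs w (w @ m)" using occ_decomp[of "w @ m" c' w v] by blast
    hence "length c' = 0 \<or> length c' + length w = length (w @ m)" using mM M_char by blast
    moreover have "length c' \<noteq> 0" using c' by simp
    moreover have "length c' + length w < length (w @ m)"
    proof -
      have "length c' = length c" using arg_cong[OF c'(2), of length] by simp
      thus ?thesis using cv by simp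
    qed
    ultimately show False by simp
  qed
  ultimately show "m \<in> Kset w" unfolding Kset_def by blast
qed

lemma K_sub_M: "Kset w \<subseteq> Mset w" unfolding K_char by blast

lemma MK_char: "Mset w - Kset w = {m \<in> Mset w. length w \<le> length m}"
  unfolding K_char by auto

lemma AW_occ: "v \<in> AW w \<Longrightarrow> occs w v \<noteq> {}"
  unfolding AW_def using end_occ by blast

lemma P0: "Pset w 0 = {}"
  unfolding Pset_def using AW_occ num_clumps_0 by blast

lemma R_occs: "r \<in> Rset w \<Longrightarrow> occs w r = {length r - length w}"
proof -
  assume r: "r \<in> Rset w"
  have rc: "(\<exists>u. r = u @ w) \<and> (\<forall>j\<in>occs w r. j + length w = length r)"
    using r R_char[of r w] by simp
  then obtain u where u: "r = u @ w" by blast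
  have all: "j = length r - length w" if "j \<in> occs w r" for j
  proof -
    have "j + length w = length r" using rc that by blast
    thus ?thesis by simp
  qed
  have lu: "length u \<in> occs w r" using u end_occ by simp
  have e: "length r - length w = length u" using u by simp
  show ?thesis unfolding e using all[unfolded e] lu by blast
qed

lemma num_clumps_single: "occs w x = {a} \<Longrightarrow> num_clumps w x = 1"
  unfolding num_clumps_ovl quot_img by simp

lemma R_AW: "r \<in> Rset w \<Longrightarrow> r \<in> AW w"
proof -
  assume "r \<in> Rset w"
  hence "\<exists>u. r = u @ w" using R_char[of r w] by simp
  thus ?thesis unfolding AW_def by simp
qed

lemma conc_AW_occs: "x \<in> conc (AW w) (Mset w) \<Longrightarrow> 0 < length w \<Longrightarrow> card (occs w x) \<ge> 2"
proof -
  assume x: "x \<in> conc (AW w) (Mset w)" and L: "0 < length w"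
  from x obtain v m where vm: "v \<in> AW w" "m \<in> Mset w" "x = v @ m" unfolding conc_def by blast
  then obtain u where u: "v = u @ w" unfolding AW_def by blast
  have "occs w x = insert (length v + length m - length w) (occs w v)"
    using occs_M[OF L u vm(2)] vm(3) by simp
  moreover have "length u \<in> occs w v" using u end_occ by simp
  moreover have m0: "m \<noteq> []" using vm(2) M_char by blast
  moreover have "length v + length m - length w \<notin> occs w v"
  proof
    assume "length v + length m - length w \<in> occs w v"
    from occs_le[OF this] have "length v + length m \<le> length v" using u by simp
    thus False using m0 by simp
  qed
  moreover have "length v + length m - length w \<noteq> length u"
    using u m0 by simp
  ultimately have "card (occs w x) = Suc (card (occs w v))" "card (occs w v) > 0"
    using occs_finite[of w v] card_gt_0_iff by auto
  thus ?thesis by simp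
qed

lemma conc_mono: "A \<subseteq> A' \<Longrightarrow> B \<subseteq> B' \<Longrightarrow> conc A B \<subseteq> conc A' B'"
  unfolding conc_def by blast

lemma P_AW: "Pset w k \<subseteq> AW w" unfolding Pset_def by blast

lemma S2_sub:
  assumes L: "0 < length w" and v: "v \<in> Pset w (Suc j)"
  shows "v \<in> ((if j = 0 then Rset w else {}) \<union> conc (Pset w (Suc j)) (Kset w)) \<union> conc (Pset w j) (Mset w - Kset w)"
proof -
  from v obtain u where u: "v = u @ w" and nc: "num_clumps w v = Suc j"
    unfolding Pset_def AW_def by blast
  have lu: "length u \<in> occs w v" using u end_occ by simp
  show ?thesis
  proof (cases "occs w v = {length u}")
    case True
    have "\<forall>i\<in>occs w v. i + length w = length v" using True u by simp
    hence "v \<in> Rset w" using u R_char by blast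
    moreover have "j = 0" using num_clumps_single[OF True] nc by simp
    ultimately show ?thesis by simp
  next
    case False
    define S where "S = occs w v - {length u}"
    have Sne: "S \<noteq> {}" using False lu unfolding S_def by blast
    have Sfin: "finite S" unfolding S_def using occs_finite by simp
    define i where "i = Max S"
    have iS: "i \<in> S" unfolding i_def using Max_in[OF Sfin Sne] .
    have imax: "j' \<le> i" if "j' \<in> S" for j' unfolding i_def using Max_ge[OF Sfin that] .
    have io: "i \<in> occs w v" and iu: "i \<noteq> length u" using iS unfolding S_def by auto
    have "i + length w \<le> length v" using occs_le[OF io] .
    hence ilt: "i < length u" using iu u by simp
    define v' where "v' = take i v @ w"
    define m where "m = drop (i + length w) v"
    have vsplit: "v = take i v @ w @ m" unfolding m_def by (rule occ_split[OF io])
    have vv: "v = v' @ m" using vsplit unfolding v'_def by simp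
    have lti: "length (take i v) = i" using ilt u by simp
    have lm: "length m = length u - i" unfolding m_def using u by simp
    have m0: "m \<noteq> []" using lm ilt by auto
    have dv: "drop i v = w @ m" using vsplit lti by (metis append_eq_conv_conj)
    have "drop i v = drop i u @ w" using u ilt by simp
    hence ends: "\<exists>u'. w @ m = u' @ w" using dv by metis
    have occm: "\<forall>j'\<in>occs w (w @ m). j' = 0 \<or> j' + length w = length (w @ m)"
    proof
      fix j' assume j': "j' \<in> occs w (w @ m)"
      have "length (take i v) + j' \<in> occs w (take i v @ (w @ m))" by (rule occs_app_shift[OF j'])
      hence ij: "i + j' \<in> occs w v" using vsplit lti by simp
      show "j' = 0 \<or> j' + length w = length (w @ m)"
      proof (cases "i + j' = length u")
        case True thus ?thesis using lm ilt by simp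
      next
        case False
        hence "i + j' \<in> S" using ij unfolding S_def by simp
        hence "i + j' \<le> i" by (rule imax)
        thus ?thesis by simp
      qed
    qed
    have mM: "m \<in> Mset w" using m0 ends occm M_char by blast
    have v'AW: "v' \<in> AW w" unfolding v'_def AW_def by blast
    have ncv: "num_clumps w v = num_clumps w v' + (if length m < length w then 0 else 1)"
      using clumps_M[OF L v'_def mM] vv by simp
    show ?thesis
    proof (cases "length m < length w")
      case True
      hence "m \<in> Kset w" using mM K_char by blast
      moreover have "v' \<in> Pset w (Suc j)" using v'AW ncv nc True by (simp add: Pset_def)
      ultimately have "v \<in> conc (Pset w (Suc j)) (Kset w)" using vv by (intro concI)
      thus ?thesis by blast
    next
      case False
      hence "m \<in> Mset w - Kset w" using mM MK_char by fastforce
      moreover have "v' \<in> Pset w j" using v'AW ncv nc False by (simp add: Pset_def)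
      ultimately have "v \<in> conc (Pset w j) (Mset w - Kset w)" using vv by (intro concI)
      thus ?thesis by blast
    qed
  qed
qed

lemma conc_P_clumps:
  assumes L: "0 < length w" and v: "v \<in> Pset w k" and m: "m \<in> Mset w"
  shows "v @ m \<in> AW w" "num_clumps w (v @ m) = k + (if length m < length w then 0 else 1)"
proof -
  from v obtain u where u: "v = u @ w" and nc: "num_clumps w v = k"
    unfolding Pset_def AW_def by blast
  show "v @ m \<in> AW w" using AW_append_M[OF _ m] v P_AW by blast
  show "num_clumps w (v @ m) = k + (if length m < length w then 0 else 1)"
    using clumps_M[OF L u m] nc by simp
qed

lemma S2:
  assumes L: "0 < length w"
  shows "Pset w (Suc j) = ((if j = 0 then Rset w else {}) \<union> conc (Pset w (Suc j)) (Kset w))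
           \<union> conc (Pset w j) (Mset w - Kset w)"
proof
  show "Pset w (Suc j) \<subseteq> ((if j = 0 then Rset w else {}) \<union> conc (Pset w (Suc j)) (Kset w))
           \<union> conc (Pset w j) (Mset w - Kset w)" using S2_sub[OF L] by blast
next
  have r: "x \<in> Pset w (Suc j)" if "j = 0" "x \<in> Rset w" for x
    using R_AW[OF that(2)] num_clumps_single[OF R_occs[OF that(2)]] that(1) by (simp add: Pset_def)
  have k: "x \<in> Pset w (Suc j)" if "x \<in> conc (Pset w (Suc j)) (Kset w)" for x
  proof -
    from that obtain v m where "v \<in> Pset w (Suc j)" "m \<in> Kset w" "x = v @ m" unfolding conc_def by blast
    moreover have "m \<in> Mset w" "length m < length w" using \<open>m \<in> Kset w\<close> K_char by blast+
    ultimately show ?thesis using conc_P_clumps[OF L] by (simp add: Pset_def)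
  qed
  have mk: "x \<in> Pset w (Suc j)" if "x \<in> conc (Pset w j) (Mset w - Kset w)" for x
  proof -
    from that obtain v m where "v \<in> Pset w j" "m \<in> Mset w - Kset w" "x = v @ m" unfolding conc_def by blast
    moreover have "m \<in> {m \<in> Mset w. length w \<le> length m}" using \<open>m \<in> Mset w - Kset w\<close> unfolding MK_char .
    hence "m \<in> Mset w" "\<not> length m < length w" by auto
    ultimately show ?thesis using conc_P_clumps[OF L] by (simp add: Pset_def)
  qed
  show "((if j = 0 then Rset w else {}) \<union> conc (Pset w (Suc j)) (Kset w))
           \<union> conc (Pset w j) (Mset w - Kset w) \<subseteq> Pset w (Suc j)"
    using r k mk by (auto split: if_splits)
qed

lemma occs_Nil: "0 < length w \<Longrightarrow> occs w [] = {}"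
  by (auto simp: occs_def)

lemma snoc_split: "x \<noteq> [] \<Longrightarrow> x = butlast x @ [last x]" by simp

lemma len1: "length y = 1 \<longleftrightarrow> (\<exists>a. y = [a])"
  by (cases y) auto

lemma E1_sets:
  assumes L: "0 < length w"
  shows "Nset w \<union> Rset w = {[]} \<union> conc (Nset w) {x. length x = 1}"
proof
  show "Nset w \<union> Rset w \<subseteq> {[]} \<union> conc (Nset w) {x. length x = 1}"
  proof
    fix x assume x: "x \<in> Nset w \<union> Rset w"
    show "x \<in> {[]} \<union> conc (Nset w) {x. length x = 1}"
    proof (cases "x = []")
      case True thus ?thesis by simp
    next
      case False
      have bN0: "occs w (butlast x) = {}"
      proof (rule ccontr)
        assume "occs w (butlast x) \<noteq> {}"
        then obtain i where i: "i \<in> occs w (butlast x)" by blast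
        hence i2: "i \<in> occs w x" using occs_app_left[OF i, of "[last x]"] snoc_split[OF False] by simp
        have "i + length w \<le> length (butlast x)" using occs_le[OF i] .
        hence lt: "i + length w < length x" using False by (cases x rule: rev_cases) auto
        show False
        proof (cases "x \<in> Nset w")
          case True thus False using i2 unfolding Nset_def by blast
        next
          case False
          hence "x \<in> Rset w" using x by blast
          hence "\<forall>j\<in>occs w x. j + length w = length x" using R_char by blast
          hence "i + length w = length x" using i2 by blast
          thus False using lt by simp
        qed
      qed
      have bN: "butlast x \<in> Nset w" using bN0 by (simp add: Nset_def)
      have "x \<in> conc (Nset w) {x. length x = 1}"
        by (rule concI[OF bN _ snoc_split[OF False]]) simp
      thus ?thesis by blast
    qed
  qed
next
  show "{[]} \<union> conc (Nset w) {x. length x = 1} \<subseteq> Nset w \<union> Rset w"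
  proof
    fix x assume x: "x \<in> {[]} \<union> conc (Nset w) {x. length x = 1}"
    show "x \<in> Nset w \<union> Rset w"
    proof (cases "x = []")
      case True thus ?thesis using occs_Nil[OF L] by (simp add: Nset_def)
    next
      case False
      with x have "x \<in> conc (Nset w) {x. length x = 1}" by blast
      then obtain y b where yb: "y \<in> Nset w" "length b = 1" "x = y @ b" unfolding conc_def by blast
      show ?thesis
      proof (cases "occs w x = {}")
        case True thus ?thesis by (simp add: Nset_def)
      next
        case False
        have all: "i + length w = length x" if i: "i \<in> occs w x" for i
        proof (rule ccontr)
          assume "i + length w \<noteq> length x"
          hence "i + length w \<le> length y" using occs_le[OF i] yb by simp
          hence "i \<in> occs w y" using occs_app_inv_left[of i w y b] i yb by simp
          thus False using yb unfolding Nset_def by blast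
        qed
        obtain i where i: "i \<in> occs w x" using False by blast
        have "length w \<le> length x \<and> length x - length w \<in> occs w x"
          using all[OF i] i by (metis add_diff_cancel_right' le_add2)
        hence "\<exists>u. x = u @ w" using ends_w_iff by blast
        hence "x \<in> Rset w" using all R_char by blast
        thus ?thesis by blast
      qed
    qed
  qed
qed

lemma E1_disj: "Nset w \<inter> Rset w = {}"
proof -
  have "x \<notin> Rset w" if "x \<in> Nset w" for x
  proof
    assume "x \<in> Rset w"
    then obtain u where "x = u @ w" using R_char by blast
    hence "length u \<in> occs w x" using end_occ by simp
    thus False using that unfolding Nset_def by blast
  qed
  thus ?thesis by blast
qed

lemma E1_disj2: "{[]} \<inter> conc (Nset w) {x. length x = 1} = {}"
proof -
  have "[] \<notin> conc (Nset w) {x. length x = 1}"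
  proof
    assume h: "[] \<in> conc (Nset w) {x. length x = 1}"
    show False by (rule concE[OF h]) simp
  qed
  thus ?thesis by blast
qed

lemma inj_len1: "inj_on (\<lambda>(x,y). x @ y) (A \<times> {x. length x = n})"
proof (rule inj_onI)
  fix p q assume h: "p \<in> A \<times> {x. length x = n}" "q \<in> A \<times> {x. length x = n}"
    "(\<lambda>(x,y). x @ y) p = (\<lambda>(x,y). x @ y) q"
  obtain a b c d where pq: "p = (a,b)" "q = (c,d)" by fastforce
  have "length b = length d" using h pq by simp
  moreover have "a @ b = c @ d" using h pq by simp
  ultimately show "p = q" using pq append_eq_append_conv[of a c b d] by simp
qed

lemma E2_sets:
  assumes L: "0 < length w"
  shows "conc (Nset w) {w} = conc (Rset w) (autocorr w)"
proof
  show "conc (Nset w) {w} \<subseteq> conc (Rset w) (autocorr w)"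
  proof
    fix z assume "z \<in> conc (Nset w) {w}"
    then obtain x b where xN: "x \<in> Nset w" and b: "b \<in> {w}" and z0: "z = x @ b" by (rule concE)
    hence z: "z = x @ w" by simp
    have ne: "occs w z \<noteq> {}" using z end_occ by blast
    define i where "i = Min (occs w z)"
    have io: "i \<in> occs w z" unfolding i_def using Min_in[OF occs_finite ne] .
    have imin: "i \<le> j" if "j \<in> occs w z" for j unfolding i_def using Min_le[OF occs_finite that] .
    have ix: "length x < i + length w"
    proof (rule ccontr)
      assume "\<not> length x < i + length w"
      hence "i \<in> occs w x" using occs_app_inv_left[of i w x w] io z by simp
      thus False using xN unfolding Nset_def by blast
    qed
    have ilx: "i \<le> length x" using occs_le[OF io] z by simp
    define e where "e = drop (i + length w) z"
    define r where "r = take i z @ w"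
    have zs: "z = take i z @ w @ e" unfolding e_def by (rule occ_split[OF io])
    have zre: "z = r @ e" using zs unfolding r_def by simp
    have lti: "length (take i z) = i" using ilx z by simp
    have rR: "r \<in> Rset w"
    proof -
      have "\<forall>j\<in>occs w r. j + length w = length r"
      proof
        fix j assume j: "j \<in> occs w r"
        have "j \<in> occs w z" using occs_app_left[OF j] zre by simp
        hence "i \<le> j" by (rule imin)
        moreover have "j + length w \<le> length r" using occs_le[OF j] .
        ultimately show "j + length w = length r" using lti unfolding r_def by simp
      qed
      thus ?thesis unfolding r_def using R_char by blast
    qed
    have le: "length e = length x - i" unfolding e_def using z by simp
    have eC: "e \<in> autocorr w"
    proof (cases "e = []")
      case True thus ?thesis by (simp add: autocorr_def)
    next
      case False
      have "drop i z = w @ e" using zs lti by (metis append_eq_conv_conj)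
      moreover have "drop i z = drop i x @ w" using z ilx by simp
      ultimately have we: "w @ e = drop i x @ w" by simp
      have "drop i x \<noteq> []" using False le ilx by auto
      moreover have "length e < length w" using le ix L by arith
      ultimately show ?thesis using we False unfolding autocorr_def by blast
    qed
    show "z \<in> conc (Rset w) (autocorr w)" by (rule concI[OF rR eC zre])
  qed
next
  show "conc (Rset w) (autocorr w) \<subseteq> conc (Nset w) {w}"
  proof
    fix z assume "z \<in> conc (Rset w) (autocorr w)"
    then obtain r e where rR: "r \<in> Rset w" and eC: "e \<in> autocorr w" and z: "z = r @ e"
      by (rule concE)
    have rc: "(\<exists>u. r = u @ w) \<and> (\<forall>j\<in>occs w r. j + length w = length r)" using rR R_char by blast
    then obtain u where u: "r = u @ w" by blast
    have all: "\<And>j. j \<in> occs w r \<Longrightarrow> j + length w = length r" using rc by blast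
    obtain e' where e': "w @ e = e' @ w" "length e < length w"
    proof (cases "e = []")
      case True thus ?thesis using that[of "[]"] L by simp
    next
      case False thus ?thesis using eC that unfolding autocorr_def by blast
    qed
    have le': "length e' = length e" using arg_cong[OF e'(1), of length] by simp
    define x where "x = u @ e'"
    have zx: "z = x @ w" using z u e'(1) unfolding x_def by simp
    have "occs w x = {}"
    proof (rule ccontr)
      assume "occs w x \<noteq> {}"
      then obtain j where j: "j \<in> occs w x" by blast
      have jl: "j + length w \<le> length x" using occs_le[OF j] .
      have "j \<in> occs w z" using occs_app_left[OF j] zx by simp
      hence "j \<in> occs w r" using occs_app_inv_left[of j w r e] z jl le' e'(2) u unfolding x_def by simp
      hence "j + length w = length r" by (rule all)
      thus False using jl le' e'(2) u unfolding x_def by simp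
    qed
    hence "x \<in> Nset w" by (simp add: Nset_def)
    thus "z \<in> conc (Nset w) {w}" using zx by (intro concI) auto
  qed
qed

lemma inj_single: "inj_on (\<lambda>(x,y). x @ y) (A \<times> {w})"
  by (rule inj_onI) auto

lemma inj_R_C: "inj_on (\<lambda>(x,y). x @ y) (Rset w \<times> autocorr w)"
proof -
  have key: "False" if r1: "r1 \<in> Rset w" and r2: "r2 \<in> Rset w" and e: "r1 @ e1 = r2 @ e2"
    and lt: "length r1 < length r2" for r1 r2 e1 e2 :: "'a list"
  proof -
    obtain t where "(r1 = r2 @ t \<and> t @ e1 = e2) \<or> (r1 @ t = r2 \<and> e1 = t @ e2)"
      using e by (auto simp: append_eq_append_conv2)
    hence t: "r2 = r1 @ t" "t \<noteq> []" using lt by auto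
    obtain u where u: "r1 = u @ w" using r1 R_char by blast
    have "length u \<in> occs w r2" using t u end_occ occs_app_left by metis
    hence "length u + length w = length r2" using r2 R_char by blast
    thus False using t u by simp
  qed
  show ?thesis
  proof (rule inj_onI)
    fix p q assume h: "p \<in> Rset w \<times> autocorr w" "q \<in> Rset w \<times> autocorr w"
      "(\<lambda>(x,y). x @ y) p = (\<lambda>(x,y). x @ y) q"
    obtain r1 e1 r2 e2 where pq: "p = (r1,e1)" "q = (r2,e2)" by fastforce
    have e: "r1 @ e1 = r2 @ e2" using h pq by simp
    have h1: "r1 \<in> Rset w" "r2 \<in> Rset w" using h pq by auto
    have "length r1 = length r2"
      using key[OF h1(1) h1(2) e] key[OF h1(2) h1(1) e[symmetric]] by (meson linorder_neqE_nat)
    thus "p = q" using e pq by simp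
  qed
qed

lemma E3_sets:
  assumes L: "0 < length w"
  shows "UNIV = Nset w \<union> conc (AW w) (Uset w)"
proof -
  have "x \<in> conc (AW w) (Uset w)" if "x \<notin> Nset w" for x
  proof -
    have "occs w x \<noteq> {}" using that by (simp add: Nset_def)
    hence "num_clumps w x \<noteq> 0" using num_clumps_0 by blast
    hence "x \<in> conc (Pset w (num_clumps w x)) (Uset w)" using Max_occ_split[OF L refl] by simp
    thus ?thesis using conc_mono[OF P_AW order_refl] by blast
  qed
  thus ?thesis by blast
qed

lemma E3_disj: "Nset w \<inter> conc (AW w) (Uset w) = {}"
proof -
  have "z \<notin> Nset w" if z: "z \<in> conc (AW w) (Uset w)" for z
  proof -
    obtain v y where v: "v \<in> AW w" and y: "y \<in> Uset w" and zv: "z = v @ y" by (rule concE[OF z])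
    then obtain u where "v = u @ w" unfolding AW_def by blast
    hence "length u \<in> occs w v" using end_occ by simp
    hence "length u \<in> occs w z" using occs_app_left zv by simp
    thus ?thesis by (auto simp: Nset_def)
  qed
  thus ?thesis by blast
qed

lemma AW_conc: "AW w = conc UNIV {w}"
  unfolding AW_def conc_def by blast

lemma Nil_U: "0 < length w \<Longrightarrow> [] \<in> Uset w"
  unfolding U_char by (auto simp: occs_def)

lemma E4_sets:
  assumes L: "0 < length w"
  shows "conc (Uset w) {x. length x = 1} = (Uset w - {[]}) \<union> Mset w"
proof
  show "conc (Uset w) {x. length x = 1} \<subseteq> (Uset w - {[]}) \<union> Mset w"
  proof
    fix z assume z: "z \<in> conc (Uset w) {x. length x = 1}"
    obtain u b where u: "u \<in> Uset w" and b: "b \<in> {x. length x = 1}" and zu: "z = u @ b"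
      by (rule concE[OF z])
    obtain a where ba: "b = [a]" using b by (cases b) auto
    have zu': "z = u @ [a]" using zu ba by simp
    have zne: "z \<noteq> []" using zu' by simp
    have lz: "length (w @ z) = Suc (length (w @ u))" using zu' by simp
    have wz: "w @ z = (w @ u) @ [a]" using zu' by simp
    show "z \<in> (Uset w - {[]}) \<union> Mset w"
    proof (cases "z \<in> Uset w")
      case True thus ?thesis using zne by blast
    next
      case False
      have uc: "\<forall>j\<in>occs w (w @ u). j = 0" using u U_char[of u w] by simp
      have all: "j = 0 \<or> j + length w = length (w @ z)" if j: "j \<in> occs w (w @ z)" for j
      proof (rule ccontr)
        assume a1: "\<not> (j = 0 \<or> j + length w = length (w @ z))"
        have "j + length w \<le> length (w @ z)" using occs_le[OF j] .
        hence jl: "j + length w \<le> length (w @ u)" using a1 lz by linarith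
        have "j \<in> occs w ((w @ u) @ [a])" using j wz by simp
        hence "j \<in> occs w (w @ u)" using occs_app_inv_left jl by blast
        thus False using uc a1 by blast
      qed
      have "\<not> (\<forall>j\<in>occs w (w @ z). j = 0)" using False U_char[of z w] by simp
      then obtain j where j: "j \<in> occs w (w @ z)" "j \<noteq> 0" by blast
      have je: "j + length w = length (w @ z)" using all[OF j(1)] j(2) by blast
      hence "length (w @ z) - length w = j" by simp
      hence "length w \<le> length (w @ z) \<and> length (w @ z) - length w \<in> occs w (w @ z)"
        using j(1) by simp
      hence "\<exists>u'. w @ z = u' @ w" using ends_w_iff by blast
      moreover have "\<forall>j\<in>occs w (w @ z). j = 0 \<or> j + length w = length (w @ z)" using all by blast
      ultimately have "z \<in> Mset w" using zne M_char[of z w] by simp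
      thus ?thesis by blast
    qed
  qed
next
  show "(Uset w - {[]}) \<union> Mset w \<subseteq> conc (Uset w) {x. length x = 1}"
  proof
    fix z assume z: "z \<in> (Uset w - {[]}) \<union> Mset w"
    have zne: "z \<noteq> []"
    proof (cases "z \<in> Mset w")
      case True thus ?thesis using M_char[of z w] by simp
    next
      case False thus ?thesis using z by blast
    qed
    have zs: "z = butlast z @ [last z]" using zne by simp
    have "\<forall>j\<in>occs w (w @ butlast z). j = 0"
    proof
      fix j assume j: "j \<in> occs w (w @ butlast z)"
      have jl: "j + length w \<le> length (w @ butlast z)" using occs_le[OF j] .
      have j2: "j \<in> occs w (w @ z)" using occs_app_left[OF j, of "[last z]"] zs
        by (metis append.assoc)
      show "j = 0"
      proof (cases "z \<in> Mset w")
        case True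
        hence "\<forall>j\<in>occs w (w @ z). j = 0 \<or> j + length w = length (w @ z)" using M_char[of z w] by simp
        hence "j = 0 \<or> j + length w = length (w @ z)" using j2 by blast
        thus ?thesis using jl zne by (cases z rule: rev_cases) auto
      next
        case False
        hence "z \<in> Uset w" using z by blast
        thus ?thesis using j2 U_char[of z w] by simp
      qed
    qed
    hence "butlast z \<in> Uset w" using U_char[of "butlast z" w] by simp
    thus "z \<in> conc (Uset w) {x. length x = 1}" using zs by (intro concI) auto
  qed
qed

lemma E4_disj: "(Uset w - {[]}) \<inter> Mset w = {}"
proof -
  have "m \<notin> Uset w" if m: "m \<in> Mset w" for m
  proof
    assume mU: "m \<in> Uset w"
    obtain u where u: "w @ m = u @ w" using m M_char by blast
    have "length u \<in> occs w (w @ m)" using u end_occ by simp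
    hence "length u = 0" using mU U_char by blast
    moreover have "length u = length m" using arg_cong[OF u, of length] by simp
    moreover have "m \<noteq> []" using m M_char by blast
    ultimately show False by simp
  qed
  thus ?thesis by blast
qed

lemma gf_empty: "lang_gf p {} = 0"
  by (rule fps_ext) (simp add: lang_gf_nth)

lemma gf_Nil: "lang_gf (p :: 'a::finite \<Rightarrow> real) {[]} = 1"
  using gf_single[of p "[]"] by (simp add: wprob_def)

lemma wprob_pos: "(\<And>a. p a > 0) \<Longrightarrow> wprob p x > 0"
  unfolding wprob_def by (induction x) auto

context
  fixes p :: "'a::finite \<Rightarrow> real" and w :: "'a list"
  assumes L: "0 < length w" and ps: "(\<Sum>a\<in>UNIV. p a) = 1"
begin

abbreviation "G \<equiv> lang_gf p"

lemma eq1: "G (Nset w) + G (Rset w) = 1 + G (Nset w) * fps_X"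
proof -
  have "G (Nset w) + G (Rset w) = G (Nset w \<union> Rset w)" by (rule gf_union[symmetric]) (rule E1_disj)
  also have "\<dots> = G ({[]} \<union> conc (Nset w) {x. length x = 1})" by (simp add: E1_sets[OF L])
  also have "\<dots> = G {[]} + G (conc (Nset w) {x. length x = 1})" by (rule gf_union) (rule E1_disj2)
  also have "\<dots> = 1 + G (Nset w) * fps_X"
    by (simp add: gf_Nil gf_conc[OF inj_len1] gf_letters[OF ps, simplified])
  finally show ?thesis .
qed

lemma eq2: "G (Nset w) * (fps_const (wprob p w) * fps_X ^ length w) = G (Rset w) * G (autocorr w)"
proof -
  have "G (conc (Nset w) {w}) = G (conc (Rset w) (autocorr w))" by (simp add: E2_sets[OF L])
  thus ?thesis by (simp add: gf_conc[OF inj_single] gf_conc[OF inj_R_C] gf_single)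
qed

lemma eq3: "G UNIV = G (Nset w) + G UNIV * (fps_const (wprob p w) * fps_X ^ length w) * G (Uset w)"
proof -
  have "G UNIV = G (Nset w \<union> conc (AW w) (Uset w))" using E3_sets[OF L] by simp
  also have "\<dots> = G (Nset w) + G (conc (AW w) (Uset w))" by (rule gf_union) (rule E3_disj)
  also have "G (conc (AW w) (Uset w)) = G (AW w) * G (Uset w)" by (rule gf_conc[OF inj_AW_U])
  also have "G (AW w) = G UNIV * (fps_const (wprob p w) * fps_X ^ length w)"
    unfolding AW_conc by (simp add: gf_conc[OF inj_single] gf_single)
  finally show ?thesis .
qed

lemma eq4: "G (Uset w) * fps_X = G (Uset w) - 1 + G (Mset w)"
proof -
  have "G (Uset w) * fps_X = G (conc (Uset w) {x. length x = 1})"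
    by (simp add: gf_conc[OF inj_len1] gf_letters[OF ps, simplified])
  also have "\<dots> = G ((Uset w - {[]}) \<union> Mset w)" by (simp only: E4_sets[OF L])
  also have "\<dots> = G (Uset w - {[]}) + G (Mset w)" by (rule gf_union) (rule E4_disj)
  also have "G (Uset w - {[]}) = G (Uset w) - 1" using gf_diff[of "{[]}" "Uset w" p] Nil_U[OF L]
    by (simp add: gf_Nil)
  finally show ?thesis by simp
qed

lemma eqP: "G (Pset w (Suc j)) = (if j = 0 then G (Rset w) else 0)
   + G (Pset w (Suc j)) * G (Kset w) + G (Pset w j) * (G (Mset w) - G (Kset w))"
proof -
  define A where "A = (if j = 0 then Rset w else {})"
  have GA: "G A = (if j = 0 then G (Rset w) else 0)" by (simp add: A_def gf_empty)
  have sub1: "conc (Pset w (Suc j)) (Kset w) \<subseteq> conc (AW w) (Mset w)"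
    by (rule conc_mono[OF P_AW K_sub_M])
  have sub2: "conc (Pset w j) (Mset w - Kset w) \<subseteq> conc (AW w) (Mset w)"
    by (rule conc_mono[OF P_AW]) blast
  have Rno: "x \<notin> conc (AW w) (Mset w)" if "x \<in> A" for x
  proof
    assume "x \<in> conc (AW w) (Mset w)"
    hence "card (occs w x) \<ge> 2" using conc_AW_occs L by blast
    moreover have "x \<in> Rset w" using that by (simp add: A_def split: if_splits)
    ultimately show False using R_occs by fastforce
  qed
  have d1: "A \<inter> conc (Pset w (Suc j)) (Kset w) = {}" using Rno sub1 by blast
  have d2: "(A \<union> conc (Pset w (Suc j)) (Kset w)) \<inter> conc (Pset w j) (Mset w - Kset w) = {}"
  proof -
    have "x \<notin> conc (Pset w j) (Mset w - Kset w)" if xin: "x \<in> conc (Pset w (Suc j)) (Kset w)" for x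
    proof
      assume "x \<in> conc (Pset w j) (Mset w - Kset w)"
      then obtain v2 m2 where h2: "v2 \<in> Pset w j" "m2 \<in> Mset w - Kset w" "x = v2 @ m2" by (rule concE)
      obtain v1 m1 where h1: "v1 \<in> Pset w (Suc j)" "m1 \<in> Kset w" "x = v1 @ m1" by (rule concE[OF xin])
      have "(v1, m1) \<in> AW w \<times> Mset w" "(v2, m2) \<in> AW w \<times> Mset w"
        using h1 h2 P_AW[of w] K_sub_M[of w] by auto
      moreover have "(\<lambda>(x,y). x @ y) (v1, m1) = (\<lambda>(x,y). x @ y) (v2, m2)" using h1 h2 by simp
      ultimately have "(v1, m1) = (v2, m2)" using inj_onD[OF inj_AW_M] by blast
      thus False using h1 h2 by simp
    qed
    thus ?thesis using Rno sub2 by blast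
  qed
  have "G (Pset w (Suc j)) = G ((A \<union> conc (Pset w (Suc j)) (Kset w)) \<union> conc (Pset w j) (Mset w - Kset w))"
    using S2[OF L, of j] unfolding A_def by simp
  also have "\<dots> = G A + G (conc (Pset w (Suc j)) (Kset w)) + G (conc (Pset w j) (Mset w - Kset w))"
    by (simp add: gf_union[OF d2] gf_union[OF d1])
  also have "G (conc (Pset w (Suc j)) (Kset w)) = G (Pset w (Suc j)) * G (Kset w)"
    by (rule gf_conc, rule inj_on_subset2[OF inj_AW_M P_AW K_sub_M])
  also have "G (conc (Pset w j) (Mset w - Kset w)) = G (Pset w j) * (G (Mset w) - G (Kset w))"
    by (simp add: gf_conc[OF inj_on_subset2[OF inj_AW_M P_AW]] gf_diff[OF K_sub_M])
  finally show ?thesis using GA by simp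
qed

lemma P_closed: "G (Pset w (Suc j)) * (1 - G (Kset w)) ^ Suc j = G (Rset w) * (G (Mset w) - G (Kset w)) ^ j"
proof (induction j)
  case 0
  have "G (Pset w 1) = G (Rset w) + G (Pset w 1) * G (Kset w)"
    using eqP[of 0] by (simp add: P0 gf_empty)
  thus ?case by (simp add: algebra_simps)
next
  case (Suc j)
  have h: "G (Pset w (Suc (Suc j))) * (1 - G (Kset w)) = G (Pset w (Suc j)) * (G (Mset w) - G (Kset w))"
    using eqP[of "Suc j"] by (simp add: algebra_simps)
  have "G (Pset w (Suc (Suc j))) * (1 - G (Kset w)) ^ Suc (Suc j)
       = (G (Pset w (Suc (Suc j))) * (1 - G (Kset w))) * (1 - G (Kset w)) ^ Suc j"
    by (simp only: power_Suc[of _ "Suc j"] mult.assoc)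
  also have "\<dots> = (G (Pset w (Suc j)) * (G (Mset w) - G (Kset w))) * (1 - G (Kset w)) ^ Suc j"
    by (simp only: h)
  also have "\<dots> = (G (Pset w (Suc j)) * (1 - G (Kset w)) ^ Suc j) * (G (Mset w) - G (Kset w))"
    by (simp only: mult_ac)
  also have "\<dots> = G (Rset w) * (G (Mset w) - G (Kset w)) ^ Suc j" using Suc by (simp add: mult_ac)
  finally show ?case .
qed

end

context
  fixes p :: "'a::finite \<Rightarrow> real" and w :: "'a list"
  assumes L: "0 < length w" and ps: "(\<Sum>a\<in>UNIV. p a) = 1" and pos: "\<And>a. p a > 0"
begin

abbreviation "GG \<equiv> lang_gf p"
abbreviation "PiW \<equiv> fps_const (wprob p w) * fps_X ^ length w"

lemma RD: "GG (Rset w) * D_gf p w = PiW"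
proof -
  have e1: "GG (Nset w) + GG (Rset w) = 1 + GG (Nset w) * fps_X" by (rule eq1[OF L ps])
  have e2: "GG (Nset w) * PiW = GG (Rset w) * GG (autocorr w)" by (rule eq2[OF L ps])
  have "GG (Rset w) * D_gf p w = GG (Rset w) * PiW + (1 - fps_X) * (GG (Rset w) * GG (autocorr w))"
    by (simp add: D_gf_def algebra_simps)
  also have "\<dots> = GG (Rset w) * PiW + (1 - fps_X) * (GG (Nset w) * PiW)" by (simp only: e2)
  also have "\<dots> = PiW * (GG (Nset w) + GG (Rset w) - GG (Nset w) * fps_X)" by (simp add: algebra_simps)
  also have "\<dots> = PiW" by (simp add: e1)
  finally show ?thesis .
qed

lemma PiW_nz: "PiW \<noteq> 0"
proof
  assume "PiW = 0"
  hence "fps_nth PiW (length w) = 0" by simp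
  moreover have "wprob p w > 0" using wprob_pos pos by blast
  ultimately show False by (simp add: fps_X_power_nth)
qed

lemma UD: "GG (Uset w) * D_gf p w = 1"
proof -
  have e1: "GG (Nset w) + GG (Rset w) = 1 + GG (Nset w) * fps_X" by (rule eq1[OF L ps])
  have e3: "GG UNIV = GG (Nset w) + GG UNIV * PiW * GG (Uset w)" by (rule eq3[OF L ps])
  have T: "GG UNIV * (1 - fps_X) = 1" by (rule gf_univ[OF ps])
  have "1 = GG UNIV * (1 - fps_X)" using T by simp
  also have "\<dots> = GG (Nset w) * (1 - fps_X) + (GG UNIV * (1 - fps_X)) * PiW * GG (Uset w)"
    by (subst e3) (simp add: algebra_simps)
  also have "\<dots> = GG (Nset w) * (1 - fps_X) + PiW * GG (Uset w)" by (simp add: T)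
  finally have "1 = GG (Nset w) * (1 - fps_X) + PiW * GG (Uset w)" .
  hence PU: "PiW * GG (Uset w) = GG (Rset w)" using e1 by (simp add: algebra_simps)
  have h: "PiW * (GG (Uset w) * D_gf p w) = PiW * 1"
    using RD by (simp add: PU mult.assoc[symmetric])
  show ?thesis by (rule mult_left_cancel[OF PiW_nz, THEN iffD1, OF h])
qed

lemma MD: "GG (Mset w) * D_gf p w = D_gf p w + fps_X - 1"
proof -
  have e4: "GG (Uset w) * fps_X = GG (Uset w) - 1 + GG (Mset w)" by (rule eq4[OF L ps])
  hence "GG (Mset w) = GG (Uset w) * fps_X - GG (Uset w) + 1" by (simp add: algebra_simps)
  hence "GG (Mset w) * D_gf p w = (GG (Uset w) * fps_X - GG (Uset w) + 1) * D_gf p w" by simp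
  also have "\<dots> = (GG (Uset w) * D_gf p w) * fps_X - GG (Uset w) * D_gf p w + D_gf p w"
    by (simp add: algebra_simps)
  finally have "GG (Mset w) * D_gf p w = (GG (Uset w) * D_gf p w) * fps_X - GG (Uset w) * D_gf p w + D_gf p w" .
  thus ?thesis using UD by simp
qed

lemma K0: "fps_nth (GG (Kset w)) 0 = 0"
proof -
  have "{x \<in> Kset w. length x = 0} = {}" by (auto simp: Kset_def autocorr0_def)
  thus ?thesis by (simp only: lang_gf_nth) simp
qed

lemma D0: "fps_nth (D_gf p w) 0 = 1"
proof -
  have "{x \<in> autocorr w. length x = 0} = {[]}" by (auto simp: autocorr_def)
  hence "fps_nth (GG (autocorr w)) 0 = 1" by (simp add: lang_gf_nth wprob_def)
  moreover have "fps_nth PiW 0 = 0" using L by (simp add: fps_X_power_nth)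
  ultimately show ?thesis by (simp add: D_gf_def)
qed

lemma H_eq: "1 \<le> k \<Longrightarrow> H_gf p w k = GG (Pset w k) * GG (Uset w)"
  unfolding H_gf_def using S1[OF L] by (simp add: gf_conc[OF inj_on_subset2[OF inj_AW_U P_AW order_refl]])

end

theorem mainTheorem8:
  fixes p :: "'a::finite \<Rightarrow> real" and w :: "'a list" and k :: nat
  assumes "CARD('a) \<ge> 2"
    and "\<And>a. p a > 0"
    and "(\<Sum>a\<in>UNIV. p a) = 1"
    and "length w \<ge> 2"
    and "k \<ge> 1"
  shows "H_gf p w k =
           lang_gf p (Rset w) * lang_gf p (Uset w) * (lang_gf p (Mset w) - lang_gf p (Kset w)) ^ (k - 1)
           / (1 - lang_gf p (Kset w)) ^ k
       \<and> H_gf p w k =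
           fps_const (wprob p w) * fps_X ^ length w
             * (fps_X - 1 + (1 - lang_gf p (Kset w)) * D_gf p w) ^ (k - 1)
           / ((1 - lang_gf p (Kset w)) ^ k * D_gf p w ^ (k + 1))"
proof -
  have L: "0 < length w" using assms(4) by linarith
  note ps = assms(3) and pos = assms(2)
  obtain j where kj: "k = Suc j" using assms(5) by (cases k) auto
  define R where "R = lang_gf p (Rset w)"
  define U where "U = lang_gf p (Uset w)"
  define M where "M = lang_gf p (Mset w)"
  define K where "K = lang_gf p (Kset w)"
  define D where "D = D_gf p w"
  define H where "H = H_gf p w k"
  have HQ: "H * (1 - K) ^ k = R * U * (M - K) ^ (k - 1)"
  proof -
    have "H = lang_gf p (Pset w (Suc j)) * U" unfolding H_def U_def kj by (rule H_eq[OF L ps pos]) simp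
    hence "H * (1 - K) ^ k = (lang_gf p (Pset w (Suc j)) * (1 - K) ^ Suc j) * U"
      by (simp add: kj mult_ac)
    also have "\<dots> = R * (M - K) ^ j * U" unfolding R_def M_def K_def by (simp only: P_closed[OF L ps])
    finally show ?thesis by (simp add: kj mult_ac)
  qed
  have nz1: "fps_nth ((1 - K) ^ k) 0 \<noteq> 0" using K0[OF L ps pos] unfolding K_def by (simp add: fps_nth_power_0)
  have nz2: "fps_nth ((1 - K) ^ k * D ^ (k + 1)) 0 \<noteq> 0"
    using K0[OF L ps pos] D0[OF L ps pos] unfolding K_def D_def by (simp add: fps_nth_power_0)
  have "R * U * (M - K) ^ (k - 1) / (1 - K) ^ k = H"
    by (subst fps_div_eq[OF nz1]) (simp add: HQ)
  hence first: "H = R * U * (M - K) ^ (k - 1) / (1 - K) ^ k" by simp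
  have RD': "R * D = fps_const (wprob p w) * fps_X ^ length w" unfolding R_def D_def by (rule RD[OF L ps pos])
  have UD': "U * D = 1" unfolding U_def D_def by (rule UD[OF L ps pos])
  have MD': "M * D = D + fps_X - 1" unfolding M_def D_def by (rule MD[OF L ps pos])
  have "H * ((1 - K) ^ k * D ^ (k + 1)) = R * U * (M - K) ^ j * D ^ (j + 2)"
    using HQ kj by (simp add: mult.assoc[symmetric])
  also have "\<dots> = (R * D) * (U * D) * ((M - K) * D) ^ j"
    by (simp add: power_mult_distrib power_add mult_ac power2_eq_square)
  also have "(M - K) * D = fps_X - 1 + (1 - K) * D" using MD' by (simp add: algebra_simps)
  finally have "H * ((1 - K) ^ k * D ^ (k + 1)) =
      fps_const (wprob p w) * fps_X ^ length w * (fps_X - 1 + (1 - K) * D) ^ (k - 1)"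
    using RD' UD' kj by simp
  hence "fps_const (wprob p w) * fps_X ^ length w * (fps_X - 1 + (1 - K) * D) ^ (k - 1)
      / ((1 - K) ^ k * D ^ (k + 1)) = H"
    by (subst fps_div_eq[OF nz2]) simp
  hence second: "H = fps_const (wprob p w) * fps_X ^ length w * (fps_X - 1 + (1 - K) * D) ^ (k - 1)
      / ((1 - K) ^ k * D ^ (k + 1))" by simp
  show ?thesis using first second unfolding H_def R_def U_def M_def K_def D_def by simp
qed

end
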